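(* Let $p>2$ be an integer and $n=2p$. Let $S=S_1\cup S_2\subseteq U_{6n}$ where $S_1=(\langle a^4\rangle\setminus\{1\})\cup\{a^{2l}b,\ a^{-2l}b^2\mid 1\le l\le n-1\}$ and $S_2=\{a^{2r+1}b\mid 0\le r\le n-1\}$. Then $\mathrm{Cay}(U_{6n},S)$ is a connected integral graph, and its spectrum (eigenvalues with multiplicities) is $\{[-3]^{4p-4},[0]^{8p-8},[p]^6,[p-3]^2,[3p-3]^1,[-3p]^2,[7p-3]^1\}$.
   Context: For an integer $n\ge1$, $U_{6n}=\langle a,b\mid a^{2n}=b^3=1,\ a^{-1}ba=b^{-1}\rangle$, a group of order $6n$. For a group $G$ and $S\subseteq G$ with $1\notin S=S^{-1}$, the Cayley graph $\mathrm{Cay}(G,S)$ has vertex set $G$ and edges $\{g,sg\}$ for $g\in G,s\in S$. A graph is integral if all eigenvalues of its adjacency matrix are integers. $[\lambda]^m$ denotes eigenvalue $\lambda$ with multiplicity $m$. *)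

theory Defs
  imports "HOL-Algebra.Algebra" "Jordan_Normal_Form.Char_Poly"
begin

text \<open>Concrete model of U_{6n} = <a,b | a^(2n) = b^3 = 1, a^(-1) b a = b^(-1)>.
  The pair (i,j) with i < 2n, j < 3 stands for the normal form a^i b^j.
  Since b^j a^k = a^k b^(j (-1)^k), we have
  (a^i b^j)(a^k b^l) = a^(i+k) b^(j (-1)^k + l).\<close>

definition U_mult :: "nat \<Rightarrow> nat \<times> nat \<Rightarrow> nat \<times> nat \<Rightarrow> nat \<times> nat" where
  "U_mult n x y = ((fst x + fst y) mod (2 * n),
      (if even (fst y) then snd x + snd y else 2 * snd x + snd y) mod 3)"

definition U6n :: "nat \<Rightarrow> (nat \<times> nat) monoid" where
  "U6n n = \<lparr> partial_object.carrier = {x. fst x < 2 * n \<and> snd x < 3}, monoid.mult = U_mult n, monoid.one = (0, 0) \<rparr>"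

definition gen_a :: "nat \<times> nat" where "gen_a = (1, 0)"
definition gen_b :: "nat \<times> nat" where "gen_b = (0, 1)"

definition cay_adj :: "('a, 'b) monoid_scheme \<Rightarrow> 'a set \<Rightarrow> 'a \<Rightarrow> 'a \<Rightarrow> bool" where
  "cay_adj G S g h \<longleftrightarrow> g \<in> carrier G \<and> h \<in> carrier G \<and> (\<exists>s\<in>S. h = s \<otimes>\<^bsub>G\<^esub> g)"

definition cay_connected :: "('a, 'b) monoid_scheme \<Rightarrow> 'a set \<Rightarrow> bool" where
  "cay_connected G S \<longleftrightarrow>
     (\<forall>g\<in>carrier G. \<forall>h\<in>carrier G. (g, h) \<in> {(x, y). cay_adj G S x y}\<^sup>*)"

text \<open>Adjacency matrix of Cay(G,S) with respect to an enumeration e of the vertices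
  by 0, ..., N-1 (the spectrum does not depend on the enumeration).\<close>

definition cay_adj_mat :: "('a, 'b) monoid_scheme \<Rightarrow> 'a set \<Rightarrow> nat \<Rightarrow> (nat \<Rightarrow> 'a) \<Rightarrow> complex mat" where
  "cay_adj_mat G S N e = mat N N (\<lambda>(i, j). if cay_adj G S (e i) (e j) then 1 else 0)"

definition integral_mat :: "complex mat \<Rightarrow> bool" where
  "integral_mat A \<longleftrightarrow> (\<forall>x. eigenvalue A x \<longrightarrow> x \<in> \<int>)"

definition S1 :: "nat \<Rightarrow> (nat \<times> nat) set" where
  "S1 n = (generate (U6n n) {gen_a [^]\<^bsub>U6n n\<^esub> (4::nat)} - {\<one>\<^bsub>U6n n\<^esub>})
       \<union> {gen_a [^]\<^bsub>U6n n\<^esub> (2 * l) \<otimes>\<^bsub>U6n n\<^esub> gen_b | l. 1 \<le> l \<and> l \<le> n - 1}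
       \<union> {gen_a [^]\<^bsub>U6n n\<^esub> (- (2 * int l)) \<otimes>\<^bsub>U6n n\<^esub> (gen_b [^]\<^bsub>U6n n\<^esub> (2::nat))
            | l. 1 \<le> l \<and> l \<le> n - 1}"

definition S2 :: "nat \<Rightarrow> (nat \<times> nat) set" where
  "S2 n = {gen_a [^]\<^bsub>U6n n\<^esub> (2 * r + 1) \<otimes>\<^bsub>U6n n\<^esub> gen_b | r. r \<le> n - 1}"

end

theory Submission
  imports Defs
begin

lemma U_carrier: "carrier (U6n n) = {x. fst x < 2 * n \<and> snd x < 3}"
  by (simp add: U6n_def)
lemma U_mult_eq: "x \<otimes>\<^bsub>U6n n\<^esub> y = U_mult n x y"
  by (simp add: U6n_def)
lemma U_one: "\<one>\<^bsub>U6n n\<^esub> = (0,0)"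
  by (simp add: U6n_def)

lemma pow_a: "n > 0 \<Longrightarrow> gen_a [^]\<^bsub>U6n n\<^esub> (m::nat) = (m mod (2*n), 0)"
proof (induction m)
  case 0 then show ?case by (simp add: U_one)
next
  case (Suc m) then show ?case
    by (simp add: U_mult_eq U_mult_def gen_a_def mod_Suc_eq)
qed

lemma pow_b2: "gen_b [^]\<^bsub>U6n n\<^esub> (2::nat) = (0, 2)"
  by (simp add: numeral_2_eq_2 U_mult_eq U_mult_def gen_b_def U_one)

lemma inv_U: assumes "n > 0" "x < 2*n"
  shows "inv\<^bsub>U6n n\<^esub> (x, 0) = ((2*n - x) mod (2*n), 0)"
  unfolding m_inv_def
proof (rule the_equality)
  show "((2*n - x) mod (2*n), 0) \<in> carrier (U6n n) \<and> (x, 0) \<otimes>\<^bsub>U6n n\<^esub> ((2*n - x) mod (2*n), 0) = \<one>\<^bsub>U6n n\<^esub>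
    \<and> ((2*n - x) mod (2*n), 0) \<otimes>\<^bsub>U6n n\<^esub> (x, 0) = \<one>\<^bsub>U6n n\<^esub>"
  proof (cases "x = 0")
    case True then show ?thesis using assms by (simp add: U_carrier U_mult_eq U_mult_def U_one)
  next
    case False
    then have "(2*n - x) mod (2*n) = 2*n - x" using assms by simp
    then show ?thesis using assms False by (simp add: U_carrier U_mult_eq U_mult_def U_one)
  qed
next
  fix y assume y: "y \<in> carrier (U6n n) \<and> (x, 0) \<otimes>\<^bsub>U6n n\<^esub> y = \<one>\<^bsub>U6n n\<^esub> \<and> y \<otimes>\<^bsub>U6n n\<^esub> (x, 0) = \<one>\<^bsub>U6n n\<^esub>"
  obtain y1 y2 where yy: "y = (y1, y2)" by force
  from y have c: "y1 < 2*n" "y2 < 3" and e: "2*n dvd (x + y1)" "3 dvd y2"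
    by (auto simp: yy U_carrier U_mult_eq U_mult_def U_one split: if_splits)
  have "y2 = 0" using c e by auto
  moreover have "y1 = (2*n - x) mod (2*n)"
  proof -
    from e(1) obtain t where t: "x + y1 = 2*n*t" by (metis dvd_def)
    have "2*n*t < 2*n*2" using t c assms by linarith
    then have "t < 2" by simp
    then have "t = 0 \<or> t = 1" by auto
    then show ?thesis using t c assms by auto
  qed
  ultimately show "y = ((2*n - x) mod (2*n), 0)" using yy by simp
qed

definition Sx :: "nat \<Rightarrow> (nat \<times> nat) set" where
  "Sx n = {(x,y). x < 2*n \<and> y < 3 \<and> x \<noteq> 0 \<and> (y = 1 \<or> (y = 2 \<and> even x) \<or> (y = 0 \<and> 4 dvd x))}"

lemma gen_eq: assumes "p > 1" "n = 2*p"
  shows "generate (U6n n) {gen_a [^]\<^bsub>U6n n\<^esub> (4::nat)} = {(x,0) | x. x < 2*n \<and> 4 dvd x}"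
proof -
  have n0: "n > 0" using assms by simp
  have a4: "gen_a [^]\<^bsub>U6n n\<^esub> (4::nat) = (4, 0)" using assms pow_a[OF n0] by simp
  have "z \<in> {(x,0) | x. x < 2*n \<and> 4 dvd x}" if "z \<in> generate (U6n n) {(4,0)}" for z
    using that
  proof (induction rule: generate.induct)
    case one then show ?case using n0 by (auto simp: U_one)
  next
    case (incl h) then show ?case using assms by auto
  next
    case (inv h)
    then have "h = (4,0)" by simp
    then show ?case using assms by (auto simp: inv_U)
  next
    case (eng h1 h2)
    then obtain x1 x2 where "h1 = (x1,0)" "x1 < 2*n" "4 dvd x1" "h2 = (x2,0)" "x2 < 2*n" "4 dvd x2" by auto
    moreover have "4 dvd (x1 + x2) mod (2*n)" using calculation assms
      by (metis dvd_add dvd_mod mult.assoc dvd_triv_left numeral_Bit0 mult_2 one_add_one)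
    ultimately show ?case using assms by (auto simp: U_mult_eq U_mult_def)
  qed
  moreover have gq: "((4*q) mod (2*n), 0) \<in> generate (U6n n) {(4,0)}" for q
  proof (induction q)
    case 0 then show ?case using generate.one[of "U6n n"] by (simp add: U_one)
  next
    case (Suc q)
    have "((4*q) mod (2*n),0) \<otimes>\<^bsub>U6n n\<^esub> (4,0) \<in> generate (U6n n) {(4,0)}"
      by (rule generate.eng[OF Suc]) (rule generate.incl, simp)
    moreover have "((4*q) mod (2*n),0) \<otimes>\<^bsub>U6n n\<^esub> (4,0) = ((4*Suc q) mod (2*n), 0)"
      by (simp add: U_mult_eq U_mult_def) (metis mod_add_left_eq add.commute)
    ultimately show ?case by simp
  qed
  moreover have "(x,0) \<in> generate (U6n n) {(4,0)}" if x2n: "x < 2*n" and d4: "4 dvd x" for x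
  proof -
    obtain q where "x = 4*q" using d4 by (metis dvdE)
    then show ?thesis using gq[of q] x2n by simp
  qed
  ultimately show ?thesis unfolding a4 by blast
qed

lemma int_pow_a: assumes "n > 0" "2*l < 2*n" "l > 0"
  shows "gen_a [^]\<^bsub>U6n n\<^esub> (- (2 * int l)) = (2*n - 2*l, 0)"
proof -
  have "gen_a [^]\<^bsub>U6n n\<^esub> (- (2 * int l)) = inv\<^bsub>U6n n\<^esub> (gen_a [^]\<^bsub>U6n n\<^esub> (nat (2 * int l)))"
    using assms unfolding int_pow_def2 by simp
  also have "nat (2 * int l) = 2*l" by simp
  also have "gen_a [^]\<^bsub>U6n n\<^esub> (2*l::nat) = (2*l, 0)" using assms pow_a[of n "2*l"] by simp
  also have "inv\<^bsub>U6n n\<^esub> (2*l, 0) = (2*n - 2*l, 0)" using assms inv_U[of n "2*l"] by simp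
  finally show ?thesis .
qed

lemma S_eq: assumes "p > 1" "n = 2*p"
  shows "S1 n \<union> S2 n = Sx n"
proof -
  have n0: "n > 0" using assms by simp
  have A: "generate (U6n n) {gen_a [^]\<^bsub>U6n n\<^esub> (4::nat)} - {\<one>\<^bsub>U6n n\<^esub>} = {(x,0) | x. x < 2*n \<and> 4 dvd x \<and> x \<noteq> 0}"
    using gen_eq[OF assms] by (auto simp: U_one)
  have B: "{gen_a [^]\<^bsub>U6n n\<^esub> (2 * l) \<otimes>\<^bsub>U6n n\<^esub> gen_b | l. 1 \<le> l \<and> l \<le> n - 1} = {(x,1) | x. x < 2*n \<and> even x \<and> x \<noteq> 0}"
  proof -
    have e: "gen_a [^]\<^bsub>U6n n\<^esub> (2 * l) \<otimes>\<^bsub>U6n n\<^esub> gen_b = (2*l, 1)" if "1 \<le> l" "l \<le> n - 1" for l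
      using that n0 pow_a[OF n0, of "2*l"] by (simp add: U_mult_eq U_mult_def gen_b_def)
    show ?thesis
    proof (rule equalityI; rule subsetI)
      fix z :: "nat \<times> nat" assume "z \<in> {gen_a [^]\<^bsub>U6n n\<^esub> (2 * l) \<otimes>\<^bsub>U6n n\<^esub> gen_b | l. 1 \<le> l \<and> l \<le> n - 1}"
      then obtain l where l: "1 \<le> l" "l \<le> n - 1" "z = gen_a [^]\<^bsub>U6n n\<^esub> (2 * l) \<otimes>\<^bsub>U6n n\<^esub> gen_b" by blast
      then have "z = (2*l, 1)" using e[OF l(1,2)] by simp
      then show "z \<in> {(x,1) | x. x < 2*n \<and> even x \<and> x \<noteq> 0}" using l n0 by auto
    next
      fix z :: "nat \<times> nat" assume "z \<in> {(x,1) | x. x < 2*n \<and> even x \<and> x \<noteq> 0}"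
      then obtain x where x: "z = (x,1)" "x < 2*n" "even x" "x \<noteq> 0" by blast
      then have l: "1 \<le> x div 2" "x div 2 \<le> n - 1" "z = (2 * (x div 2), 1)" by auto
      then have "z = gen_a [^]\<^bsub>U6n n\<^esub> (2 * (x div 2)) \<otimes>\<^bsub>U6n n\<^esub> gen_b" using e[OF l(1,2)] by simp
      then show "z \<in> {gen_a [^]\<^bsub>U6n n\<^esub> (2 * l) \<otimes>\<^bsub>U6n n\<^esub> gen_b | l. 1 \<le> l \<and> l \<le> n - 1}"
        using l(1,2) by blast
    qed
  qed
  have C: "{gen_a [^]\<^bsub>U6n n\<^esub> (- (2 * int l)) \<otimes>\<^bsub>U6n n\<^esub> (gen_b [^]\<^bsub>U6n n\<^esub> (2::nat)) | l. 1 \<le> l \<and> l \<le> n - 1}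
      = {(x,2) | x. x < 2*n \<and> even x \<and> x \<noteq> 0}"
  proof -
    have e: "gen_a [^]\<^bsub>U6n n\<^esub> (- (2 * int l)) \<otimes>\<^bsub>U6n n\<^esub> (gen_b [^]\<^bsub>U6n n\<^esub> (2::nat)) = (2*n - 2*l, 2)"
      if "1 \<le> l" "l \<le> n - 1" for l
      using that n0 int_pow_a[OF n0, of l] pow_b2[of n] by (simp add: U_mult_eq U_mult_def)
    show ?thesis
    proof (rule equalityI; rule subsetI)
      fix z :: "nat \<times> nat" assume "z \<in> {gen_a [^]\<^bsub>U6n n\<^esub> (- (2 * int l)) \<otimes>\<^bsub>U6n n\<^esub> (gen_b [^]\<^bsub>U6n n\<^esub> (2::nat)) | l. 1 \<le> l \<and> l \<le> n - 1}"
      then obtain l where l: "1 \<le> l" "l \<le> n - 1" "z = gen_a [^]\<^bsub>U6n n\<^esub> (- (2 * int l)) \<otimes>\<^bsub>U6n n\<^esub> (gen_b [^]\<^bsub>U6n n\<^esub> (2::nat))" by blast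
      then have "z = (2*n - 2*l, 2)" using e[OF l(1,2)] by simp
      then show "z \<in> {(x,2) | x. x < 2*n \<and> even x \<and> x \<noteq> 0}" using l n0 by auto
    next
      fix z :: "nat \<times> nat" assume "z \<in> {(x,2) | x. x < 2*n \<and> even x \<and> x \<noteq> 0}"
      then obtain x where x: "z = (x,2)" "x < 2*n" "even x" "x \<noteq> 0" by blast
      then have l: "1 \<le> n - x div 2" "n - x div 2 \<le> n - 1" "z = (2*n - 2 * (n - x div 2), 2)" by auto
      then have "z = gen_a [^]\<^bsub>U6n n\<^esub> (- (2 * int (n - x div 2))) \<otimes>\<^bsub>U6n n\<^esub> (gen_b [^]\<^bsub>U6n n\<^esub> (2::nat))" using e[OF l(1,2)] by simp
      then show "z \<in> {gen_a [^]\<^bsub>U6n n\<^esub> (- (2 * int l)) \<otimes>\<^bsub>U6n n\<^esub> (gen_b [^]\<^bsub>U6n n\<^esub> (2::nat)) | l. 1 \<le> l \<and> l \<le> n - 1}"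
        using l(1,2) by blast
    qed
  qed
  have D: "S2 n = {(x,1) | x. x < 2*n \<and> odd x}"
  proof -
    have e: "gen_a [^]\<^bsub>U6n n\<^esub> (2 * r + 1) \<otimes>\<^bsub>U6n n\<^esub> gen_b = (2*r+1, 1)" if "r \<le> n - 1" for r
      using that n0 pow_a[OF n0, of "2*r+1"] by (simp add: U_mult_eq U_mult_def gen_b_def)
    show ?thesis unfolding S2_def
    proof (rule equalityI; rule subsetI)
      fix z :: "nat \<times> nat" assume "z \<in> {gen_a [^]\<^bsub>U6n n\<^esub> (2 * r + 1) \<otimes>\<^bsub>U6n n\<^esub> gen_b | r. r \<le> n - 1}"
      then obtain r where l: "r \<le> n - 1" "z = gen_a [^]\<^bsub>U6n n\<^esub> (2 * r + 1) \<otimes>\<^bsub>U6n n\<^esub> gen_b" by blast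
      then have "z = (2*r+1, 1)" using e[OF l(1)] by simp
      then show "z \<in> {(x,1) | x. x < 2*n \<and> odd x}" using l n0 by auto
    next
      fix z :: "nat \<times> nat" assume "z \<in> {(x,1) | x. x < 2*n \<and> odd x}"
      then obtain x where x: "z = (x,1)" "x < 2*n" "odd x" by blast
      then have l: "x div 2 \<le> n - 1" "z = (2 * (x div 2) + 1, 1)" by auto
      then have "z = gen_a [^]\<^bsub>U6n n\<^esub> (2 * (x div 2) + 1) \<otimes>\<^bsub>U6n n\<^esub> gen_b" using e[OF l(1)] by simp
      then show "z \<in> {gen_a [^]\<^bsub>U6n n\<^esub> (2 * r + 1) \<otimes>\<^bsub>U6n n\<^esub> gen_b | r. r \<le> n - 1}"
        using l(1) by blast
    qed
  qed
  show ?thesis unfolding S1_def A B C D Sx_def by (auto intro: odd_pos)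
qed


definition M0' :: "nat \<Rightarrow> nat \<Rightarrow> nat \<Rightarrow> nat \<Rightarrow> bool" where
  "M0' r j s l = (if even r = even s then (j \<noteq> l \<or> r = s) else if even r then l = (j+1) mod 3 else j = (l+1) mod 3)"

lemma mod_sum_cases: fixes x i k N :: nat assumes "x < N" "i < N" shows "(k = (x + i) mod N) \<longleftrightarrow> (k < N \<and> (x + i = k \<or> x + i = k + N))"
proof (cases "x + i < N")
  case True
  then have "(x+i) mod N = x + i" by (rule mod_less)
  then show ?thesis using True by auto
next
  case False
  then have "(x + i) mod N = x + i - N" using assms by (simp add: le_mod_geq)
  then show ?thesis using False assms by auto
qed

lemma even_mod4: "even ((a::nat) mod 4) = even a" by presburger

lemma par_facts: assumes "x + i = k \<or> x + i = k + 4*(p::nat)"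
  shows "even k = (even x = even i)" "(k mod 4 = i mod 4) = (4 dvd x)"
  using assms by presburger+

lemma adj_char: assumes "p > 1" "n = 2*p" "i < 2*n" "j < 3" "k < 2*n" "l < 3"
  shows "(\<exists>s\<in>Sx n. (k,l) = U_mult n s (i,j)) \<longleftrightarrow> (M0' (i mod 4) j (k mod 4) l \<and> i \<noteq> k)"
proof
  assume "\<exists>s\<in>Sx n. (k,l) = U_mult n s (i,j)"
  then obtain x y where xy: "(x,y) \<in> Sx n" "(k,l) = U_mult n (x,y) (i,j)" by auto
  then have x: "x < 2*n" "y < 3" "x \<noteq> 0" "y = 1 \<or> (y = 2 \<and> even x) \<or> (y = 0 \<and> 4 dvd x)"
    by (auto simp: Sx_def)
  from xy have kk: "k = (x + i) mod (2*n)" and ll: "l = (if even i then y + j else 2*y + j) mod 3"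
    by (auto simp: U_mult_def)
  from kk have k2: "x + i = k \<or> x + i = k + 4*p" using mod_sum_cases[of x "2*n" i k] x assms by auto
  have ik: "i \<noteq> k" using k2 x assms by auto
  note pf = par_facts[OF k2]
  have "y = 0 \<or> y = 1 \<or> y = 2" "j = 0 \<or> j = 1 \<or> j = 2" using x assms by auto
  then show "M0' (i mod 4) j (k mod 4) l \<and> i \<noteq> k"
    using ik pf x(4) ll unfolding M0'_def even_mod4 by (elim disjE) auto
next
  assume m: "M0' (i mod 4) j (k mod 4) l \<and> i \<noteq> k"
  define x where "x = (if i \<le> k then k - i else k + 2*n - i)"
  define y where "y = (if even i then (l + 3 - j) mod 3 else (2*(l + 3 - j)) mod 3)"
  have k2: "x + i = k \<or> x + i = k + 4*p" and x2: "x < 2*n" using assms unfolding x_def by auto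
  have x0: "x \<noteq> 0" using m assms unfolding x_def by auto
  note pf = par_facts[OF k2]
  have "k = (x + i) mod (2*n)" using mod_sum_cases[of x "2*n" i k] x2 k2 assms by auto
  moreover have "l = (if even i then y + j else 2*y + j) mod 3"
  proof -
    have "j = 0 \<or> j = 1 \<or> j = 2" "l = 0 \<or> l = 1 \<or> l = 2" using assms by auto
    then show ?thesis unfolding y_def by (elim disjE) auto
  qed
  moreover have "(x,y) \<in> Sx n"
  proof -
    have jl: "j = 0 \<or> j = 1 \<or> j = 2" "l = 0 \<or> l = 1 \<or> l = 2" using assms by auto
    have y3: "y < 3" unfolding y_def by auto
    have y0: "y = 0 \<longleftrightarrow> j = l" using jl unfolding y_def by (elim disjE) auto
    have y1: "y = 1" if "even i" "l = (j+1) mod 3" using jl that unfolding y_def by (elim disjE) auto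
    have y1': "y = 1" if "odd i" "j = (l+1) mod 3" using jl that unfolding y_def by (elim disjE) auto
    have c: "y = 1 \<or> (y = 2 \<and> even x) \<or> (y = 0 \<and> 4 dvd x)"
    proof (cases "even i = even k")
      case True
      then have ex: "even x" using pf by auto
      have "j \<noteq> l \<or> i mod 4 = k mod 4" using m True unfolding M0'_def even_mod4 by auto
      then show ?thesis using ex y0 y3 pf by auto
    next
      case False
      then show ?thesis using m y1 y1' unfolding M0'_def even_mod4 by (auto split: if_splits)
    qed
    show ?thesis unfolding Sx_def using c y3 x2 x0 by auto
  qed
  ultimately have "(x,y) \<in> Sx n \<and> (k,l) = U_mult n (x,y) (i,j)" by (simp add: U_mult_def)
  then show "\<exists>s\<in>Sx n. (k,l) = U_mult n s (i,j)" by blast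
qed


definition btab :: "int list list" where
  "btab = [[1, 1, 1, 0, 0, 0, -1, -1, -1, 0, 0, 0], [1, -1, 0, 0, 0, 0, -1, 1, 0, 0, 0, 0], [1, 1, -2, 0, 0, 0, -1, -1, 2, 0, 0, 0], [0, 0, 0, 1, 1, 1, 0, 0, 0, -1, -1, -1], [0, 0, 0, 1, -1, 0, 0, 0, 0, -1, 1, 0], [0, 0, 0, 1, 1, -2, 0, 0, 0, -1, -1, 2], [1, 1, 1, 1, 1, 1, 1, 1, 1, 1, 1, 1], [1, 1, 1, -1, -1, -1, 1, 1, 1, -1, -1, -1], [1, -1, 0, 0, 1, -1, 1, -1, 0, 0, 1, -1], [1, 1, -2, -2, 1, 1, 1, 1, -2, -2, 1, 1], [1, -1, 0, 0, -1, 1, 1, -1, 0, 0, -1, 1], [1, 1, -2, 2, -1, -1, 1, 1, -2, 2, -1, -1]]"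
definition tau :: "int list" where "tau = [1,1,1,1,1,1,7,3,1,1,-3,-3]"
definition sig :: "int list" where "sig = [3,0,0,3,0,0,3,3,0,0,0,0]"
definition bnrm :: "int list" where "bnrm = [6,4,12,6,4,12,12,12,8,24,8,24]"
definition M0c :: "nat \<Rightarrow> nat \<Rightarrow> bool" where "M0c c d = M0' (c div 3) (c mod 3) (d div 3) (d mod 3)"

lemma F1l: "list_all (\<lambda>c. list_all (\<lambda>d. sum_list (map (\<lambda>e. if M0c d e then btab!c!e else 0) [0..<12]) = tau!c * btab!c!d) [0..<12]) [0..<12]"
  by code_simp
lemma F2l: "list_all (\<lambda>c. list_all (\<lambda>d. sum_list (map (\<lambda>e. if d div 3 = e div 3 then btab!c!e else 0) [0..<12]) = sig!c * btab!c!d) [0..<12]) [0..<12]"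
  by code_simp
lemma F3l: "list_all (\<lambda>c. list_all (\<lambda>c'. sum_list (map (\<lambda>e. btab!c!e * btab!c'!e) [0..<12]) = (if c = c' then bnrm!c else 0)) [0..<12]) [0..<12]"
  by code_simp


lemma list_all_upt_iff: "list_all P [0..<n] \<longleftrightarrow> (\<forall>c<n. P c)"
  by (auto simp: list_all_iff)

lemma sum_list_upt_conv: "sum_list (map (f :: nat \<Rightarrow> int) [0..<n]) = (\<Sum>e<n. f e)"
  by (simp add: sum_set_upt_conv_sum_list_nat[symmetric] atLeast0LessThan)

definition beta :: "nat \<Rightarrow> nat \<Rightarrow> complex" where "beta c d = of_int (btab!c!d)"

lemma F1: assumes "c < 12" "d < 12"
  shows "(\<Sum>e<12. (if M0c d e then beta c e else 0)) = of_int (tau!c) * beta c d"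
proof -
  have "(\<Sum>e<12. (if M0c d e then btab!c!e else 0)) = tau!c * btab!c!d"
    using F1l assms unfolding list_all_upt_iff sum_list_upt_conv by blast
  then have "of_int (\<Sum>e<12. (if M0c d e then btab!c!e else 0)) = (of_int (tau!c * btab!c!d) :: complex)" by simp
  moreover have "(\<Sum>e<12. (if M0c d e then beta c e else 0)) = of_int (\<Sum>e<12. (if M0c d e then btab!c!e else 0))"
    unfolding of_int_sum beta_def by (rule sum.cong) auto
  ultimately show ?thesis unfolding beta_def by simp
qed

lemma F2: assumes "c < 12" "d < 12"
  shows "(\<Sum>e<12. (if d div 3 = e div 3 then beta c e else 0)) = of_int (sig!c) * beta c d"
proof -
  have "(\<Sum>e<12. (if d div 3 = e div 3 then btab!c!e else 0)) = sig!c * btab!c!d"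
    using F2l assms unfolding list_all_upt_iff sum_list_upt_conv by blast
  then have "of_int (\<Sum>e<12. (if d div 3 = e div 3 then btab!c!e else 0)) = (of_int (sig!c * btab!c!d) :: complex)" by simp
  moreover have "(\<Sum>e<12. (if d div 3 = e div 3 then beta c e else 0)) = of_int (\<Sum>e<12. (if d div 3 = e div 3 then btab!c!e else 0))"
    unfolding of_int_sum beta_def by (rule sum.cong) auto
  ultimately show ?thesis unfolding beta_def by simp
qed

lemma F3: assumes "c < 12" "c' < 12"
  shows "(\<Sum>e<12. beta c e * beta c' e) = (if c = c' then of_int (bnrm!c) else 0)"
proof -
  have "(\<Sum>e<12. btab!c!e * btab!c'!e) = (if c = c' then bnrm!c else 0)"
    using F3l assms unfolding list_all_upt_iff sum_list_upt_conv by blast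
  then have "of_int (\<Sum>e<12. btab!c!e * btab!c'!e) = (of_int (if c = c' then bnrm!c else 0) :: complex)" by simp
  then show ?thesis unfolding beta_def of_int_sum by simp
qed

definition alpha :: "nat \<Rightarrow> nat \<Rightarrow> complex" where
  "alpha k q = (if k = 0 then 1 else if q < k then 1 else if q = k then - of_nat k else 0)"

lemma sum_lt: "k \<le> p \<Longrightarrow> (\<Sum>q<p. (if q < k then (1::complex) else 0)) = of_nat k"
proof -
  assume "k \<le> p"
  then have "{..<p} \<inter> {q. q < k} = {..<k}" by auto
  then show ?thesis by (simp add: sum.If_cases)
qed

lemma H1: assumes "k < p"
  shows "(\<Sum>q<p. alpha k q) = (if k = 0 then of_nat p else 0)"
proof (cases "k = 0")
  case True then show ?thesis by (simp add: alpha_def)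
next
  case False
  have "alpha k q = (if q < k then 1 else 0) - (if q = k then of_nat k else 0)" for q
    using False by (auto simp: alpha_def)
  then have "(\<Sum>q<p. alpha k q) = (\<Sum>q<p. (if q < k then (1::complex) else 0)) - (\<Sum>q<p. (if q = k then of_nat k else 0))"
    by (simp add: sum_subtractf)
  also have "\<dots> = 0" using assms by (simp add: sum_lt)
  finally show ?thesis using False by simp
qed

lemma H2: assumes "k < p" "k' < p"
  shows "(\<Sum>q<p. alpha k q * alpha k' q) = (if k = k' then (if k = 0 then of_nat p else of_nat k + of_nat k ^ 2) else 0)"
proof -
  consider "k = 0" | "k' = 0" | "0 < k" "k < k'" | "0 < k'" "k' < k" | "0 < k" "k = k'" by linarith
  then show ?thesis
  proof cases
    case 1 then show ?thesis using H1[OF assms(2)] by (simp add: alpha_def)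
  next
    case 2 then show ?thesis using H1[OF assms(1)] by (simp add: alpha_def)
  next
    case 3
    have "(\<Sum>q<p. alpha k q * alpha k' q) = (\<Sum>q<p. alpha k q)"
      by (rule sum.cong) (use 3 in \<open>auto simp: alpha_def\<close>)
    then show ?thesis using H1[OF assms(1)] 3 by simp
  next
    case 4
    have "(\<Sum>q<p. alpha k q * alpha k' q) = (\<Sum>q<p. alpha k' q)"
      by (rule sum.cong) (use 4 in \<open>auto simp: alpha_def\<close>)
    then show ?thesis using H1[OF assms(2)] 4 by simp
  next
    case 5
    then have "alpha k q * alpha k' q = (if q < k then 1 else 0) + (if q = k then of_nat k ^ 2 else 0)" for q
      by (auto simp: alpha_def power2_eq_square)
    then have "(\<Sum>q<p. alpha k q * alpha k' q) = (\<Sum>q<p. (if q < k then (1::complex) else 0)) + (\<Sum>q<p. (if q = k then of_nat k ^ 2 else 0))"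
      by (simp add: sum.distrib)
    then show ?thesis using assms 5 by (simp add: sum_lt)
  qed
qed


definition cellc :: "nat \<times> nat \<Rightarrow> nat" where "cellc g = 3 * (fst g mod 4) + snd g"
definition vt :: "nat \<Rightarrow> nat \<Rightarrow> nat \<times> nat" where "vt q c = (4 * q + c div 3, c mod 3)"
definition Fv :: "nat \<Rightarrow> nat \<times> nat \<Rightarrow> complex" where
  "Fv b g = alpha (b div 12) (fst g div 4) * beta (b mod 12) (cellc g)"
definition lam :: "nat \<Rightarrow> nat \<Rightarrow> complex" where
  "lam p b = (if b div 12 = 0 then of_int (int p * tau!(b mod 12) - sig!(b mod 12)) else - of_int (sig!(b mod 12)))"
definition wt :: "nat \<Rightarrow> nat \<Rightarrow> complex" where
  "wt p b = (if b div 12 = 0 then of_nat p else of_nat (b div 12) + of_nat (b div 12) ^ 2) * of_int (bnrm!(b mod 12))"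

lemma vt_simps: "c < 12 \<Longrightarrow> fst (vt q c) div 4 = q" "c < 12 \<Longrightarrow> cellc (vt q c) = c"
  "c < 12 \<Longrightarrow> fst (vt q c) mod 4 = c div 3"
  by (auto simp: vt_def cellc_def)

lemma sum_carrier: assumes "p > 0" "n = 2*p"
  shows "(\<Sum>g\<in>carrier (U6n n). f g) = (\<Sum>q<p. \<Sum>c<12. f (vt q c))"
proof -
  have bij: "bij_betw (\<lambda>a. vt (fst a) (snd a)) ({..<p} \<times> {..<12}) (carrier (U6n n))"
  proof (rule bij_betw_byWitness[where f' = "\<lambda>g. (fst g div 4, cellc g)"])
    show "\<forall>a\<in>{..<p} \<times> {..<12::nat}. (fst ((\<lambda>a. vt (fst a) (snd a)) a) div 4, cellc ((\<lambda>a. vt (fst a) (snd a)) a)) = a"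
      by (auto simp: vt_simps)
    show "\<forall>a'\<in>carrier (U6n n). (\<lambda>a. vt (fst a) (snd a)) (fst a' div 4, cellc a') = a'"
      by (auto simp: U_carrier vt_def cellc_def)
    show "(\<lambda>a. vt (fst a) (snd a)) ` ({..<p} \<times> {..<12}) \<subseteq> carrier (U6n n)"
      using assms by (auto simp: U_carrier vt_def)
    show "(\<lambda>g. (fst g div 4, cellc g)) ` carrier (U6n n) \<subseteq> {..<p} \<times> {..<12}"
      using assms by (auto simp: U_carrier cellc_def)
  qed
  have "(\<Sum>g\<in>carrier (U6n n). f g) = (\<Sum>a\<in>{..<p} \<times> {..<12}. f ((\<lambda>a. vt (fst a) (snd a)) a))"
    using sum.reindex_bij_betw[OF bij, of f] by simp
  also have "\<dots> = (\<Sum>q<p. \<Sum>c<12. f (vt q c))"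
    by (simp add: sum.cartesian_product case_prod_beta)
  finally show ?thesis .
qed

lemma adj_vt: assumes "p > 1" "n = 2*p" "g \<in> carrier (U6n n)" "q' < p" "e < 12"
  shows "cay_adj (U6n n) (Sx n) g (vt q' e) \<longleftrightarrow>
    M0c (cellc g) e \<and> \<not> (fst g div 4 = q' \<and> cellc g div 3 = e div 3)"
proof -
  obtain i j where g: "g = (i,j)" "i < 2*n" "j < 3" using assms by (cases g) (auto simp: U_carrier)
  have vc: "vt q' e \<in> carrier (U6n n)" using assms by (auto simp: U_carrier vt_def)
  have "cay_adj (U6n n) (Sx n) g (vt q' e) \<longleftrightarrow> (\<exists>s\<in>Sx n. (4*q' + e div 3, e mod 3) = U_mult n s (i,j))"
    using assms vc unfolding cay_adj_def g U_mult_eq vt_def by simp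
  also have "\<dots> \<longleftrightarrow> M0' (i mod 4) j ((4*q' + e div 3) mod 4) (e mod 3) \<and> i \<noteq> 4*q' + e div 3"
    by (rule adj_char) (use assms g in auto)
  also have "\<dots> \<longleftrightarrow> M0c (cellc g) e \<and> \<not> (fst g div 4 = q' \<and> cellc g div 3 = e div 3)"
  proof -
    have "(4*q' + e div 3) mod 4 = e div 3" using assms by auto
    moreover have "cellc g div 3 = i mod 4" "cellc g mod 3 = j" using g by (auto simp: cellc_def)
    moreover have "i \<noteq> 4*q' + e div 3 \<longleftrightarrow> \<not> (i div 4 = q' \<and> i mod 4 = e div 3)"
    proof -
      have e4: "e div 3 < 4" using assms(5) by auto
      then have d1: "(4*q' + e div 3) div 4 = q'" and d2: "(4*q' + e div 3) mod 4 = e div 3" by auto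
      have "4 * (i div 4) + i mod 4 = i" by simp
      then show ?thesis using d1 d2 by metis
    qed
    ultimately show ?thesis unfolding M0c_def g by auto
  qed
  finally show ?thesis .
qed


lemma M0c_same: "d div 3 = e div 3 \<Longrightarrow> M0c d e"
  by (simp add: M0c_def M0'_def)

lemma eigen_sum: assumes "p > 1" "n = 2*p" "g \<in> carrier (U6n n)" "b < 12*p"
  shows "(\<Sum>h\<in>carrier (U6n n). (if cay_adj (U6n n) (Sx n) g h then 1 else 0) * Fv b h) = lam p b * Fv b g"
proof -
  define k where "k = b div 12"
  define c where "c = b mod 12"
  define d where "d = cellc g"
  define q where "q = fst g div 4"
  have kp: "k < p" using assms unfolding k_def by auto
  have c12: "c < 12" unfolding c_def by auto
  have d12: "d < 12" using assms unfolding d_def by (auto simp: U_carrier cellc_def)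
  have qp: "q < p" using assms unfolding q_def by (auto simp: U_carrier)
  have p0: "p > 0" using assms by simp
  have "(\<Sum>h\<in>carrier (U6n n). (if cay_adj (U6n n) (Sx n) g h then 1 else 0) * Fv b h)
      = (\<Sum>q'<p. \<Sum>e<12. (if cay_adj (U6n n) (Sx n) g (vt q' e) then 1 else 0) * Fv b (vt q' e))"
    by (rule sum_carrier[OF p0 assms(2)])
  also have "\<dots> = (\<Sum>q'<p. \<Sum>e<12. ((if M0c d e then 1 else 0) - (if q = q' \<and> d div 3 = e div 3 then 1 else 0))
       * (alpha k q' * beta c e))"
  proof (rule sum.cong[OF refl], rule sum.cong[OF refl])
    fix q' e assume "q' \<in> {..<p}" "e \<in> {..<(12::nat)}"
    then have qe: "q' < p" "e < 12" by auto
    have "Fv b (vt q' e) = alpha k q' * beta c e" unfolding Fv_def k_def c_def using vt_simps qe by simp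
    moreover have "(if cay_adj (U6n n) (Sx n) g (vt q' e) then 1 else 0) = ((if M0c d e then 1 else 0) - (if q = q' \<and> d div 3 = e div 3 then 1 else (0::complex)))"
    proof -
      have A: "cay_adj (U6n n) (Sx n) g (vt q' e) \<longleftrightarrow> M0c d e \<and> \<not> (q = q' \<and> d div 3 = e div 3)"
        using adj_vt[OF assms(1,2,3) qe] unfolding d_def q_def .
      show ?thesis unfolding A
        by (cases "M0c d e"; cases "q = q'"; cases "d div 3 = e div 3") (simp_all add: M0c_same)
    qed
    ultimately show "(if cay_adj (U6n n) (Sx n) g (vt q' e) then 1 else 0) * Fv b (vt q' e) =
      ((if M0c d e then 1 else 0) - (if q = q' \<and> d div 3 = e div 3 then 1 else 0)) * (alpha k q' * beta c e)"
      by simp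
  qed
  also have "\<dots> = (\<Sum>q'<p. alpha k q' * (\<Sum>e<12. (if M0c d e then beta c e else 0)))
      - (\<Sum>q'<p. (if q = q' then alpha k q' * (\<Sum>e<12. (if d div 3 = e div 3 then beta c e else 0)) else 0))"
  proof -
    have "(\<Sum>q'<p. \<Sum>e<12. ((if M0c d e then 1 else 0) - (if q = q' \<and> d div 3 = e div 3 then 1 else 0)) * (alpha k q' * beta c e))
      = (\<Sum>q'<p. \<Sum>e<12. alpha k q' * (if M0c d e then beta c e else 0) - (if q = q' then alpha k q' * (if d div 3 = e div 3 then beta c e else 0) else 0))"
      by (rule sum.cong[OF refl], rule sum.cong[OF refl],
          cases "M0c d e"; cases "q = q'"; cases "d div 3 = e div 3") simp_all
    also have "\<dots> = (\<Sum>q'<p. alpha k q' * (\<Sum>e<12. (if M0c d e then beta c e else 0))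
       - (if q = q' then alpha k q' * (\<Sum>e<12. (if d div 3 = e div 3 then beta c e else 0)) else 0))"
      by (rule sum.cong[OF refl]) (simp only: sum_subtractf sum_distrib_left, simp)
    finally show ?thesis by (simp only: sum_subtractf)
  qed
  also have "\<dots> = (\<Sum>q'<p. alpha k q') * (of_int (tau!c) * beta c d) - alpha k q * (of_int (sig!c) * beta c d)"
    using qp by (simp add: F1[OF c12 d12] F2[OF c12 d12] sum_distrib_right)
  also have "\<dots> = lam p b * Fv b g"
  proof (cases "k = 0")
    case True
    then show ?thesis using H1[OF kp] unfolding lam_def Fv_def k_def[symmetric] c_def[symmetric] d_def[symmetric] q_def[symmetric]
      by (simp add: alpha_def algebra_simps)
  next
    case False
    then show ?thesis using H1[OF kp] unfolding lam_def Fv_def k_def[symmetric] c_def[symmetric] d_def[symmetric] q_def[symmetric]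
      by (simp add: algebra_simps)
  qed
  finally show ?thesis .
qed

lemma orth_sum: assumes "p > 1" "n = 2*p" "b < 12*p" "b' < 12*p"
  shows "(\<Sum>g\<in>carrier (U6n n). Fv b g * Fv b' g) = (if b = b' then wt p b else 0)"
proof -
  have p0: "p > 0" using assms by simp
  have kp: "b div 12 < p" "b' div 12 < p" using assms by auto
  have c12: "b mod 12 < 12" "b' mod 12 < 12" by auto
  have "(\<Sum>g\<in>carrier (U6n n). Fv b g * Fv b' g) = (\<Sum>q<p. \<Sum>e<12. Fv b (vt q e) * Fv b' (vt q e))"
    by (rule sum_carrier[OF p0 assms(2)])
  also have "\<dots> = (\<Sum>q<p. \<Sum>e<12. (alpha (b div 12) q * alpha (b' div 12) q) * (beta (b mod 12) e * beta (b' mod 12) e))"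
    by (rule sum.cong[OF refl], rule sum.cong[OF refl]) (auto simp: Fv_def vt_simps)
  also have "\<dots> = (\<Sum>q<p. alpha (b div 12) q * alpha (b' div 12) q) * (\<Sum>e<12. beta (b mod 12) e * beta (b' mod 12) e)"
    by (simp only: sum_product)
  also have "\<dots> = (if b = b' then wt p b else 0)"
  proof -
    have "b = b' \<longleftrightarrow> b div 12 = b' div 12 \<and> b mod 12 = b' mod 12"
      by (metis div_mult_mod_eq)
    then show ?thesis unfolding H2[OF kp] F3[OF c12] wt_def by auto
  qed
  finally show ?thesis .
qed


lemma prod_list_upt_conv: "prod_list (map f [0..<N]) = (\<Prod>i<N. f i)"
  by (induction N) (simp_all add: mult.commute)

lemma sum_e: fixes N :: nat assumes "bij_betw e {..<N} (carrier (U6n n))"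
  shows "(\<Sum>a\<in>{0..<N}. f (e a)) = (\<Sum>g\<in>carrier (U6n n). f g)"
proof -
  have "{0..<N} = {..<N}" by auto
  then show ?thesis using sum.reindex_bij_betw[OF assms, of f] by simp
qed

lemma wt_nz: assumes "p > 0" "b < 12*p" shows "wt p b \<noteq> 0"
proof -
  have "list_all (\<lambda>c. bnrm!c \<noteq> 0) [0..<12]" by code_simp
  then have "bnrm!(b mod 12) \<noteq> 0" unfolding list_all_upt_iff by auto
  moreover have "(if b div 12 = 0 then of_nat p else of_nat (b div 12) + of_nat (b div 12) ^ 2) \<noteq> (0::complex)"
  proof (cases "b div 12 = 0")
    case True then show ?thesis using assms by simp
  next
    case False
    have "of_nat (b div 12) + of_nat (b div 12) ^ 2 = (of_nat (b div 12 + (b div 12)^2) :: complex)" by simp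
    also have "\<dots> \<noteq> 0" using False by (simp only: of_nat_eq_0_iff)
    finally show ?thesis using False by simp
  qed
  ultimately show ?thesis unfolding wt_def by simp
qed

lemma main_char: assumes "p > 1" "n = 2*p" "bij_betw e {..<6*n} (carrier (U6n n))"
  shows "char_poly (cay_adj_mat (U6n n) (Sx n) (6*n) e) = (\<Prod>b<12*p. [:- lam p b, 1:])"
proof -
  define N where "N = 12*p"
  have N6: "6*n = N" using assms unfolding N_def by simp
  have bij: "bij_betw e {..<N} (carrier (U6n n))" using assms N6 by simp
  have ec: "e a \<in> carrier (U6n n)" if "a < N" for a using bij that by (auto simp: bij_betw_def)
  have p0: "p > 0" using assms by simp
  define A where "A = cay_adj_mat (U6n n) (Sx n) N e"
  define P where "P = mat N N (\<lambda>(a,b). Fv b (e a))"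
  define Q where "Q = mat N N (\<lambda>(b,a). Fv b (e a) / wt p b)"
  define D where "D = mat N N (\<lambda>(i,j). if i = j then lam p i else 0)"
  have cA: "A \<in> carrier_mat N N" and cP: "P \<in> carrier_mat N N" and cQ: "Q \<in> carrier_mat N N" and cD: "D \<in> carrier_mat N N"
    unfolding A_def P_def Q_def D_def cay_adj_mat_def by auto
  have QP: "Q * P = 1\<^sub>m N"
  proof (rule eq_matI)
    fix b b' assume bb: "b < dim_row (1\<^sub>m N)" "b' < dim_col (1\<^sub>m N)"
    then have bN: "b < N" "b' < N" by auto
    have "(Q * P) $$ (b, b') = (\<Sum>a\<in>{0..<N}. Fv b (e a) / wt p b * Fv b' (e a))"
      using bN cQ cP unfolding Q_def P_def by (simp add: scalar_prod_def)
    also have "\<dots> = (\<Sum>a\<in>{0..<N}. Fv b (e a) * Fv b' (e a)) / wt p b"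
      by (simp add: sum_divide_distrib)
    also have "\<dots> = (\<Sum>g\<in>carrier (U6n n). Fv b g * Fv b' g) / wt p b"
      using sum_e[OF bij, of "\<lambda>g. Fv b g * Fv b' g"] by simp
    also have "\<dots> = (if b = b' then 1 else 0)"
      using orth_sum[OF assms(1,2), of b b'] bN wt_nz[OF p0, of b] unfolding N_def by (cases "b = b'") simp_all
    finally show "(Q * P) $$ (b, b') = 1\<^sub>m N $$ (b, b')" using bN by simp
  qed (use cQ cP in auto)
  have PQ: "P * Q = 1\<^sub>m N" by (rule mat_mult_left_right_inverse[OF cQ cP QP])
  have AP: "A * P = P * D"
  proof (rule eq_matI)
    fix a b assume ab: "a < dim_row (P * D)" "b < dim_col (P * D)"
    then have aN: "a < N" "b < N" using cP cD by auto
    have "(A * P) $$ (a, b) = (\<Sum>a'\<in>{0..<N}. (if cay_adj (U6n n) (Sx n) (e a) (e a') then 1 else 0) * Fv b (e a'))"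
      using aN unfolding A_def P_def cay_adj_mat_def by (simp add: scalar_prod_def)
    also have "\<dots> = (\<Sum>h\<in>carrier (U6n n). (if cay_adj (U6n n) (Sx n) (e a) h then 1 else 0) * Fv b h)"
      using sum_e[OF bij, of "\<lambda>h. (if cay_adj (U6n n) (Sx n) (e a) h then 1 else 0) * Fv b h"] by simp
    also have "\<dots> = lam p b * Fv b (e a)"
      using eigen_sum[OF assms(1,2) ec[OF aN(1)], of b] aN unfolding N_def by simp
    also have "\<dots> = (P * D) $$ (a, b)"
    proof -
      have "(P * D) $$ (a, b) = (\<Sum>j\<in>{0..<N}. Fv j (e a) * (if j = b then lam p j else 0))"
        using aN unfolding P_def D_def by (simp add: scalar_prod_def)
      also have "\<dots> = (\<Sum>j\<in>{0..<N}. (if j = b then Fv j (e a) * lam p j else 0))"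
        by (rule sum.cong) auto
      also have "\<dots> = Fv b (e a) * lam p b" using aN by simp
      finally show ?thesis by simp
    qed
    finally show "(A * P) $$ (a, b) = (P * D) $$ (a, b)" .
  qed (use cA cP cD in auto)
  have AD: "A = P * D * Q"
  proof -
    have "A = A * (P * Q)" using cA PQ by simp
    also have "\<dots> = A * P * Q" using cA cP cQ by (simp add: assoc_mult_mat)
    also have "\<dots> = P * D * Q" using AP by simp
    finally show ?thesis .
  qed
  have sim: "similar_mat A D"
    unfolding similar_mat_def similar_mat_wit_def Let_def
    using cA cP cQ cD PQ QP AD by (intro exI[of _ P] exI[of _ Q]) auto
  have ut: "upper_triangular D" unfolding D_def upper_triangular_def by auto
  have "char_poly A = char_poly D" by (rule char_poly_similar[OF sim])
  also have "\<dots> = (\<Prod>a \<leftarrow> diag_mat D. [:- a, 1:])" by (rule char_poly_upper_triangular[OF cD ut])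
  also have "\<dots> = (\<Prod>b<N. [:- lam p b, 1:])"
  proof -
    have "diag_mat D = map (\<lambda>i. lam p i) [0..<N]" unfolding diag_mat_def D_def by auto
    then show ?thesis by (simp add: prod_list_upt_conv comp_def)
  qed
  moreover have "6*n = 12*p" using assms by simp
  ultimately show ?thesis unfolding A_def N_def by simp
qed


lemma prod12: fixes f :: "nat \<Rightarrow> 'a::comm_monoid_mult"
  shows "(\<Prod>b<12*p. f b) = (\<Prod>k<p. \<Prod>c<12. f (12 * k + c))"
proof -
  have bij: "bij_betw (\<lambda>a. 12 * fst a + snd a) ({..<p} \<times> {..<12}) {..<12*p}"
  proof (rule bij_betw_byWitness[where f' = "\<lambda>b. (b div 12, b mod 12)"])
    show "\<forall>a\<in>{..<p} \<times> {..<12::nat}. ((12 * fst a + snd a) div 12, (12 * fst a + snd a) mod 12) = a" by auto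
    show "\<forall>a'\<in>{..<12*p}. 12 * fst (a' div 12, a' mod 12) + snd (a' div 12, a' mod 12) = a'" by auto
    show "(\<lambda>a. 12 * fst a + snd a) ` ({..<p} \<times> {..<12}) \<subseteq> {..<12*p}" by auto
    show "(\<lambda>b. (b div 12, b mod 12)) ` {..<12*p} \<subseteq> {..<p} \<times> {..<12}" by auto
  qed
  have "(\<Prod>b<12*p. f b) = (\<Prod>a\<in>{..<p} \<times> {..<12}. f (12 * fst a + snd a))"
    using prod.reindex_bij_betw[OF bij, of f] by simp
  also have "\<dots> = (\<Prod>k<p. \<Prod>c<12. f (12 * k + c))"
    by (simp add: prod.cartesian_product case_prod_beta)
  finally show ?thesis .
qed

lemma G1: "(\<Prod>c<12. [:of_int (sig!c), 1:]) = ([:3, 1:] ^ 4 * [:0, 1:] ^ 8 :: complex poly)"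
  unfolding prod_list_upt_conv[symmetric] by (simp add: upt_rec sig_def eval_nat_numeral)

lemma plist12: fixes a d f g h :: "'a::comm_monoid_mult"
  shows "prod_list [d,a,a,d,a,a,f,g,a,a,h,h] = a ^ 6 * d ^ 2 * g * h ^ 2 * f"
  by (simp add: ac_simps eval_nat_numeral)

lemma G0: "(\<Prod>c<12. [:- of_int (int p * tau!c - sig!c), 1:]) =
   ([:- of_nat p, 1:] ^ 6 * [:- (of_nat p - 3), 1:] ^ 2 * [:- (3 * of_nat p - 3), 1:]
              * [:3 * of_nat p, 1:] ^ 2 * [:- (7 * of_nat p - 3), 1:] :: complex poly)"
proof -
  have "map (\<lambda>c. [:- of_int (int p * tau!c - sig!c), 1:]) [0..<12] =
    ([[:- (of_nat p - 3), 1:], [:- of_nat p, 1:], [:- of_nat p, 1:], [:- (of_nat p - 3), 1:], [:- of_nat p, 1:], [:- of_nat p, 1:],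
     [:- (7 * of_nat p - 3), 1:], [:- (3 * of_nat p - 3), 1:], [:- of_nat p, 1:], [:- of_nat p, 1:], [:3 * of_nat p, 1:], [:3 * of_nat p, 1:]] :: complex poly list)"
    by (simp add: upt_rec tau_def sig_def mult.commute)
  then show ?thesis unfolding prod_list_upt_conv[symmetric] by (simp only: plist12)
qed


lemma pow_regroup: fixes x y a1 a2 a3 a4 a5 :: "'a::comm_monoid_mult"
  shows "x ^ (4 * m) * y ^ (8 * m) * a1 * a2 * a3 * a4 * a5 = (x ^ 4 * y ^ 8) ^ m * (a1 * a2 * a3 * a4 * a5)"
proof -
  have "x ^ (4 * m) * y ^ (8 * m) = (x ^ 4 * y ^ 8) ^ m" by (simp only: power_mult power_mult_distrib)
  then show ?thesis by (metis mult.assoc)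
qed

lemma poly_final: assumes "p > 1"
  shows "(\<Prod>b<12*p. [:- lam p b, 1:]) =
    [:3, 1:] ^ (4 * p - 4) * [:0, 1:] ^ (8 * p - 8) * [:- of_nat p, 1:] ^ 6
              * [:- (of_nat p - 3), 1:] ^ 2 * [:- (3 * of_nat p - 3), 1:]
              * [:3 * of_nat p, 1:] ^ 2 * [:- (7 * of_nat p - 3), 1:]"
proof -
  define G0r :: "complex poly" where "G0r = [:- of_nat p, 1:] ^ 6 * [:- (of_nat p - 3), 1:] ^ 2 * [:- (3 * of_nat p - 3), 1:]
              * [:3 * of_nat p, 1:] ^ 2 * [:- (7 * of_nat p - 3), 1:]"
  define G1r :: "complex poly" where "G1r = [:3, 1:] ^ 4 * [:0, 1:] ^ 8"
  have inner: "(\<Prod>c<12. [:- lam p (12 * k + c), 1:]) = (if k = 0 then G0r else G1r)" for k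
  proof -
    have "(\<Prod>c<12. [:- lam p (12 * k + c), 1:]) =
      (\<Prod>c<12. (if k = 0 then [:- of_int (int p * tau!c - sig!c), 1:] else [:of_int (sig!c), 1:]))"
      by (rule prod.cong) (auto simp: lam_def)
    also have "\<dots> = (if k = 0 then G0r else G1r)"
      unfolding G0r_def G1r_def using G0[of p] G1 by (cases "k = 0") simp_all
    finally show ?thesis .
  qed
  have "(\<Prod>b<12*p. [:- lam p b, 1:]) = (\<Prod>k<p. (if k = 0 then G0r else G1r))"
    unfolding prod12 inner by simp
  also have "\<dots> = G0r * (\<Prod>k\<in>{1..<p}. (if k = 0 then G0r else G1r))"
  proof -
    have "{..<p} = insert 0 {1..<p}" using assms by auto
    then show ?thesis by simp
  qed
  also have "(\<Prod>k\<in>{1..<p}. (if k = 0 then G0r else G1r)) = G1r ^ (p - 1)"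
    by (subst prod.cong[OF refl, where h = "\<lambda>_. G1r"]) auto
  finally have "(\<Prod>b<12*p. [:- lam p b, 1:]) = G1r ^ (p - 1) * G0r" by (simp add: mult.commute)
  moreover have e1: "4 * p - 4 = 4 * (p - 1)" and e2: "8 * p - 8 = 8 * (p - 1)" by auto
  ultimately show ?thesis unfolding e1 e2 pow_regroup G0r_def G1r_def by (simp only: mult.assoc)
qed



lemma edge: assumes "p > 1" "n = 2*p" "i < 2*n" "j < 3" "k < 2*n" "l < 3"
  "M0' (i mod 4) j (k mod 4) l" "i \<noteq> k"
  shows "((i,j),(k,l)) \<in> {(x,y). cay_adj (U6n n) (S1 n \<union> S2 n) x y}"
proof -
  have "\<exists>s\<in>Sx n. (k,l) = U_mult n s (i,j)" using adj_char[OF assms(1-6)] assms(7,8) by simp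
  then show ?thesis using assms unfolding S_eq[OF assms(1,2)] cay_adj_def by (simp add: U_carrier U_mult_eq)
qed

lemma M0'_sym: "M0' r j s l \<Longrightarrow> M0' s l r j"
  unfolding M0'_def by (cases "even r"; cases "even s") auto

lemma adj_sym: assumes "p > 1" "n = 2*p" "cay_adj (U6n n) (S1 n \<union> S2 n) g h"
  shows "cay_adj (U6n n) (S1 n \<union> S2 n) h g"
proof -
  obtain i j k l where g: "g = (i,j)" and h: "h = (k,l)" by (cases g, cases h) auto
  from assms(3) have c: "i < 2*n" "j < 3" "k < 2*n" "l < 3" and ex: "\<exists>s\<in>Sx n. (k,l) = U_mult n s (i,j)"
    unfolding S_eq[OF assms(1,2)] cay_adj_def g h by (auto simp: U_carrier U_mult_eq)
  then have m: "M0' (i mod 4) j (k mod 4) l" "i \<noteq> k" using adj_char[OF assms(1,2) c] by auto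
  have "M0' (k mod 4) l (i mod 4) j" using m(1) by (rule M0'_sym)
  then have "((k,l),(i,j)) \<in> {(x,y). cay_adj (U6n n) (S1 n \<union> S2 n) x y}"
    using edge[OF assms(1,2) c(3,4,1,2)] m(2) by auto
  then show ?thesis using g h by simp
qed

lemma reach: assumes "p > 1" "n = 2*p" "k < 2*n" "l < 3"
  shows "((0,0),(k,l)) \<in> {(x,y). cay_adj (U6n n) (S1 n \<union> S2 n) x y}\<^sup>*"
proof -
  let ?R = "{(x,y). cay_adj (U6n n) (S1 n \<union> S2 n) x y}"
  have n4: "4 \<le> 2*n" using assms by simp
  have E: "((i,j),(k',l')) \<in> ?R\<^sup>*" if "i < 2*n" "j < 3" "k' < 2*n" "l' < 3" "M0' (i mod 4) j (k' mod 4) l'" "i \<noteq> k'" for i j k' l'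
    using edge[OF assms(1,2) that] by blast
  have l3: "l = 0 \<or> l = 1 \<or> l = 2" using assms by auto
  show ?thesis
  proof (cases "even k")
    case True
    have km: "even (k mod 4)" using True by (simp add: even_mod4)
    have k1: "k \<noteq> 1" using True by auto
    from l3 show ?thesis
    proof (elim disjE)
      assume l: "l = 0"
      have "((0,0),(1,1)) \<in> ?R\<^sup>*" by (rule E) (use n4 in \<open>auto simp: M0'_def\<close>)
      moreover have "((1,1),(k,l)) \<in> ?R\<^sup>*" by (rule E) (use n4 assms l km k1 in \<open>auto simp: M0'_def\<close>)
      ultimately show ?thesis by (rule rtrancl_trans)
    next
      assume l: "l = 1"
      have "((0,0),(2,1)) \<in> ?R\<^sup>*" by (rule E) (use n4 in \<open>auto simp: M0'_def\<close>)
      moreover have "((2,1),(1,2)) \<in> ?R\<^sup>*" by (rule E) (use n4 in \<open>auto simp: M0'_def\<close>)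
      moreover have "((1,2),(k,l)) \<in> ?R\<^sup>*" by (rule E) (use n4 assms l km k1 in \<open>auto simp: M0'_def\<close>)
      ultimately show ?thesis by (meson rtrancl_trans)
    next
      assume l: "l = 2"
      have "((0,0),(2,2)) \<in> ?R\<^sup>*" by (rule E) (use n4 in \<open>auto simp: M0'_def\<close>)
      moreover have "((2,2),(1,0)) \<in> ?R\<^sup>*" by (rule E) (use n4 in \<open>auto simp: M0'_def\<close>)
      moreover have "((1,0),(k,l)) \<in> ?R\<^sup>*" by (rule E) (use n4 assms l km k1 in \<open>auto simp: M0'_def\<close>)
      ultimately show ?thesis by (meson rtrancl_trans)
    qed
  next
    case False
    have km: "odd (k mod 4)" using False by (simp add: even_mod4)
    have k0: "k \<noteq> 0" "k \<noteq> 2" "0 < k" using False odd_pos by auto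
    from l3 show ?thesis
    proof (elim disjE)
      assume l: "l = 1"
      show ?thesis by (rule E) (use n4 assms l km k0 in \<open>auto simp: M0'_def\<close>)
    next
      assume l: "l = 2"
      have "((0,0),(2,1)) \<in> ?R\<^sup>*" by (rule E) (use n4 in \<open>auto simp: M0'_def\<close>)
      moreover have "((2,1),(k,l)) \<in> ?R\<^sup>*" by (rule E) (use n4 assms l km k0 in \<open>auto simp: M0'_def\<close>)
      ultimately show ?thesis by (rule rtrancl_trans)
    next
      assume l: "l = 0"
      have "((0,0),(2,2)) \<in> ?R\<^sup>*" by (rule E) (use n4 in \<open>auto simp: M0'_def\<close>)
      moreover have "((2,2),(k,l)) \<in> ?R\<^sup>*" by (rule E) (use n4 assms l km k0 in \<open>auto simp: M0'_def\<close>)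
      ultimately show ?thesis by (rule rtrancl_trans)
    qed
  qed
qed

lemma connected: assumes "p > 1" "n = 2*p"
  shows "cay_connected (U6n n) (S1 n \<union> S2 n)"
  unfolding cay_connected_def
proof (intro ballI)
  let ?R = "{(x,y). cay_adj (U6n n) (S1 n \<union> S2 n) x y}"
  fix g h assume g: "g \<in> carrier (U6n n)" and h: "h \<in> carrier (U6n n)"
  have symR: "sym ?R" unfolding sym_def using adj_sym[OF assms] by blast
  have "((0,0), g) \<in> ?R\<^sup>*" using reach[OF assms, of "fst g" "snd g"] g by (simp add: U_carrier)
  then have "(g, (0,0)) \<in> ?R\<^sup>*" using sym_rtrancl[OF symR] unfolding sym_def by blast
  moreover have "((0,0), h) \<in> ?R\<^sup>*" using reach[OF assms, of "fst h" "snd h"] h by (simp add: U_carrier)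
  ultimately show "(g, h) \<in> ?R\<^sup>*" by (rule rtrancl_trans)
qed

theorem corollary3p3:
  fixes p :: nat and n :: nat
  assumes "p > 2" and "n = 2 * p"
  shows "cay_connected (U6n n) (S1 n \<union> S2 n)
       \<and> (\<forall>e. bij_betw e {..<6 * n} (carrier (U6n n)) \<longrightarrow>
            integral_mat (cay_adj_mat (U6n n) (S1 n \<union> S2 n) (6 * n) e)
          \<and> char_poly (cay_adj_mat (U6n n) (S1 n \<union> S2 n) (6 * n) e) =
              [:3, 1:] ^ (4 * p - 4) * [:0, 1:] ^ (8 * p - 8) * [:- of_nat p, 1:] ^ 6
              * [:- (of_nat p - 3), 1:] ^ 2 * [:- (3 * of_nat p - 3), 1:]
              * [:3 * of_nat p, 1:] ^ 2 * [:- (7 * of_nat p - 3), 1:])"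
proof -
  have p1: "p > 1" using assms by simp
  have SE: "S1 n \<union> S2 n = Sx n" by (rule S_eq[OF p1 assms(2)])
  show ?thesis
  proof (intro conjI allI impI)
    show "cay_connected (U6n n) (S1 n \<union> S2 n)" by (rule connected[OF p1 assms(2)])
  next
    fix e assume bij: "bij_betw e {..<6 * n} (carrier (U6n n))"
    have cp: "char_poly (cay_adj_mat (U6n n) (S1 n \<union> S2 n) (6 * n) e) = (\<Prod>b<12*p. [:- lam p b, 1:])"
      unfolding SE by (rule main_char[OF p1 assms(2) bij])
    then show "char_poly (cay_adj_mat (U6n n) (S1 n \<union> S2 n) (6 * n) e) =
              [:3, 1:] ^ (4 * p - 4) * [:0, 1:] ^ (8 * p - 8) * [:- of_nat p, 1:] ^ 6
              * [:- (of_nat p - 3), 1:] ^ 2 * [:- (3 * of_nat p - 3), 1:]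
              * [:3 * of_nat p, 1:] ^ 2 * [:- (7 * of_nat p - 3), 1:]"
      using poly_final[OF p1] by simp
    show "integral_mat (cay_adj_mat (U6n n) (S1 n \<union> S2 n) (6 * n) e)"
      unfolding integral_mat_def
    proof (intro allI impI)
      fix x assume ev: "eigenvalue (cay_adj_mat (U6n n) (S1 n \<union> S2 n) (6 * n) e) x"
      have cA: "cay_adj_mat (U6n n) (S1 n \<union> S2 n) (6 * n) e \<in> carrier_mat (6*n) (6*n)"
        unfolding cay_adj_mat_def by simp
      have "poly (\<Prod>b<12*p. [:- lam p b, 1:]) x = 0"
        using ev unfolding eigenvalue_root_char_poly[OF cA] cp .
      then obtain b where "poly [:- lam p b, 1:] x = 0" by (auto simp: poly_prod prod_zero_iff)
      then have "x = lam p b" by simp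
      then show "x \<in> \<int>" unfolding lam_def by auto
    qed
  qed
qed

end
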